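(* Let $p$ be a prime, $\mathbb{F}=\mathbb{F}_p$, and let $f\in\mathbb{F}[x_1,\dots,x_n]$ be a homogeneous polynomial of degree at most $p-1$. Let $Z=\{x\in\mathbb{F}^n: f(x)=0\}$ and let $a\in\mathbb{F}\setminus\{0\}$ be such that $S=\{x\in\mathbb{F}^n: f(x)=a\}$ is nonempty. Then the $p$-dimensional rectangle $Z\times S\times\cdots\times S$ contains no line with direction $d\in Z$.
   Context: The line through $x\in\mathbb{F}^n$ in direction $d\in\mathbb{F}^n$ is $\ell_{x,d}=(x+\lambda d)_{\lambda\in\mathbb{F}}$; a rectangle $T_1\times\cdots\times T_p$ contains $\ell_{x,d}$ if $x+\lambda d\in T_{\lambda+1}$ for every $\lambda\in\{0,1,\dots,p-1\}$. *)

theory Defs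
  imports "HOL-Analysis.Analysis" "Berlekamp_Zassenhaus.Finite_Field"
begin

text \<open>Multivariate polynomials in the variables indexed by the finite type 'n,
  represented by their coefficient function on exponent vectors (monomials).\<close>

definition monom_eval :: "('n::finite \<Rightarrow> nat) \<Rightarrow> 'a::comm_ring_1 ^ 'n \<Rightarrow> 'a" where
  "monom_eval \<alpha> x = (\<Prod>i\<in>UNIV. (x $ i) ^ (\<alpha> i))"

definition mpoly_eval :: "(('n::finite \<Rightarrow> nat) \<Rightarrow> 'a::comm_ring_1) \<Rightarrow> 'a ^ 'n \<Rightarrow> 'a" where
  "mpoly_eval c x = (\<Sum>\<alpha>\<in>{\<alpha>. c \<alpha> \<noteq> 0}. c \<alpha> * monom_eval \<alpha> x)"

definition homogeneous_of_degree :: "(('n::finite \<Rightarrow> nat) \<Rightarrow> 'a::zero) \<Rightarrow> nat \<Rightarrow> bool" where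
  "homogeneous_of_degree c k \<longleftrightarrow> (\<forall>\<alpha>. c \<alpha> \<noteq> 0 \<longrightarrow> (\<Sum>i\<in>UNIV. \<alpha> i) = k)"

text \<open>The rectangle T 0 x T 1 x ... x T (m-1) (0-indexed) contains the line through x
  in direction d, i.e. x + lambda d is in T lambda for lambda = 0, ..., m-1.\<close>
definition rect_contains_line :: "nat \<Rightarrow> (nat \<Rightarrow> ('a::comm_ring_1 ^ 'n) set) \<Rightarrow> 'a ^ 'n \<Rightarrow> 'a ^ 'n \<Rightarrow> bool" where
  "rect_contains_line m T x d \<longleftrightarrow> (\<forall>t\<in>{0..<m}. x + of_nat t *s d \<in> T t)"

end

theory Submission
  imports Defs
begin

hide_const (open) up_ring.coeff module.smult


lemma coeff_mult_le_deg:
  fixes p q :: "'a::comm_ring_1 poly"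
  assumes "degree p \<le> m" "degree q \<le> n"
  shows "coeff (p * q) (m + n) = coeff p m * coeff q n"
proof (cases "degree p = m \<and> degree q = n")
  case True
  then show ?thesis using coeff_mult_degree_sum[of p q] by simp
next
  case False
  then have lt: "degree p < m \<or> degree q < n" using assms by linarith
  have "degree (p*q) \<le> degree p + degree q" by (rule degree_mult_le)
  then have "degree (p*q) < m + n" using lt assms by linarith
  then have "coeff (p*q) (m+n) = 0" by (rule coeff_eq_0)
  moreover have "coeff p m = 0 \<or> coeff q n = 0"
    using lt coeff_eq_0[of p m] coeff_eq_0[of q n] by blast
  ultimately show ?thesis by auto
qed

lemma prod_deg_coeff:
  fixes q :: "'b \<Rightarrow> 'a::comm_ring_1 poly"
  assumes "finite A" "\<And>i. i \<in> A \<Longrightarrow> degree (q i) \<le> n i"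
  shows "degree (prod q A) \<le> sum n A \<and> coeff (prod q A) (sum n A) = (\<Prod>i\<in>A. coeff (q i) (n i))"
  using assms
proof (induction A rule: finite_induct)
  case empty then show ?case by simp
next
  case (insert a A)
  then have IH: "degree (prod q A) \<le> sum n A" "coeff (prod q A) (sum n A) = (\<Prod>i\<in>A. coeff (q i) (n i))"
    by auto
  have da: "degree (q a) \<le> n a" using insert by auto
  have "degree (q a * prod q A) \<le> n a + sum n A"
    using degree_mult_le[of "q a" "prod q A"] IH(1) da by linarith
  moreover have "coeff (q a * prod q A) (n a + sum n A) = coeff (q a) (n a) * coeff (prod q A) (sum n A)"
    by (rule coeff_mult_le_deg[OF da IH(1)])
  ultimately show ?case using insert IH by simp
qed

lemma pow_deg_coeff:
  fixes q :: "'a::comm_ring_1 poly"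
  assumes "degree q \<le> 1"
  shows "degree (q ^ m) \<le> m \<and> coeff (q ^ m) m = coeff q 1 ^ m"
  using prod_deg_coeff[of "{..<m}" "\<lambda>_. q" "\<lambda>_. 1"] assms by simp

theorem lemma3p4:
  fixes f :: "('n::finite \<Rightarrow> nat) \<Rightarrow> 'p::prime_card mod_ring"
    and k :: nat and a :: "'p mod_ring"
  assumes "homogeneous_of_degree f k"
    and "k \<le> CARD('p) - 1"
    and "a \<noteq> 0"
    and "{x. mpoly_eval f x = a} \<noteq> {}"
  shows "\<not> (\<exists>x d. d \<in> {x. mpoly_eval f x = 0} \<and>
            rect_contains_line CARD('p)
              (\<lambda>i. if i = 0 then {x. mpoly_eval f x = 0} else {x. mpoly_eval f x = a}) x d)"
proof
  assume "\<exists>x d. d \<in> {x. mpoly_eval f x = 0} \<and>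
            rect_contains_line CARD('p)
              (\<lambda>i. if i = 0 then {x. mpoly_eval f x = 0} else {x. mpoly_eval f x = a}) x d"
  then obtain x d where fd: "mpoly_eval f d = 0" and
    line0: "\<forall>t\<in>{0..<CARD('p)}. x + of_nat t *s d \<in>
       (if t = 0 then {x. mpoly_eval f x = 0} else {x. mpoly_eval f x = a})"
    unfolding rect_contains_line_def by blast
  have line: "\<And>t. t < CARD('p) \<Longrightarrow> x + of_nat t *s d \<in>
       (if t = 0 then {x. mpoly_eval f x = 0} else {x. mpoly_eval f x = a})"
    using line0 by simp
  define F where "F = {\<alpha>. f \<alpha> \<noteq> 0}"
  have finF: "finite F"
  proof (rule ccontr)
    assume "infinite F"
    then have "\<And>y. mpoly_eval f y = 0" unfolding mpoly_eval_def F_def by simp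
    then show False using assms(3,4) by auto
  qed
  define P where "P \<alpha> = (\<Prod>i\<in>UNIV. [:x $ i, d $ i:] ^ (\<alpha> i))" for \<alpha>
  have polyP: "poly (P \<alpha>) l = monom_eval \<alpha> (x + l *s d)" for \<alpha> l
    unfolding P_def monom_eval_def by (simp add: poly_prod algebra_simps)
  have degP: "degree (P \<alpha>) \<le> sum \<alpha> UNIV \<and> coeff (P \<alpha>) (sum \<alpha> UNIV) = monom_eval \<alpha> d" for \<alpha>
  proof -
    have "degree ([:x $ i, d $ i:] ^ (\<alpha> i)) \<le> \<alpha> i \<and>
          coeff ([:x $ i, d $ i:] ^ (\<alpha> i)) (\<alpha> i) = (d $ i) ^ (\<alpha> i)" for i
      using pow_deg_coeff[of "[:x $ i, d $ i:]" "\<alpha> i"] by simp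
    then show ?thesis unfolding P_def monom_eval_def
      using prod_deg_coeff[of UNIV "\<lambda>i. [:x $ i, d $ i:] ^ (\<alpha> i)" \<alpha>] by simp
  qed
  define g where "g = (\<Sum>\<alpha>\<in>F. smult (f \<alpha>) (P \<alpha>))"
  have polyg: "poly g l = mpoly_eval f (x + l *s d)" for l
    unfolding g_def mpoly_eval_def F_def by (simp add: poly_sum polyP)
  have hom: "\<And>\<alpha>. \<alpha> \<in> F \<Longrightarrow> sum \<alpha> UNIV = k"
    using assms(1) unfolding homogeneous_of_degree_def F_def by auto
  have degg: "degree g \<le> k"
    unfolding g_def
  proof (rule degree_sum_le[OF finF])
    fix \<alpha> assume "\<alpha> \<in> F"
    then show "degree (smult (f \<alpha>) (P \<alpha>)) \<le> k"
      using degP[of \<alpha>] hom[of \<alpha>] degree_smult_le[of "f \<alpha>" "P \<alpha>"] by linarith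
  qed
  have coeffg: "coeff g k = 0"
  proof -
    have "coeff g k = (\<Sum>\<alpha>\<in>F. f \<alpha> * monom_eval \<alpha> d)"
      unfolding g_def coeff_sum coeff_smult
    proof (rule sum.cong[OF refl])
      fix \<alpha> assume "\<alpha> \<in> F"
      then show "f \<alpha> * coeff (P \<alpha>) k = f \<alpha> * monom_eval \<alpha> d"
        using degP[of \<alpha>] hom[of \<alpha>] by simp
    qed
    also have "\<dots> = mpoly_eval f d" unfolding mpoly_eval_def F_def by simp
    finally show ?thesis using fd by simp
  qed
  have p2: "CARD('p) \<ge> 2" using prime_card prime_ge_2_nat by blast
  have degg2: "degree g \<le> CARD('p) - 2"
  proof (cases "k = 0")
    case True
    then have "g = 0" using degg coeffg by (metis le_zero_eq leading_coeff_0_iff)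
    then show ?thesis by simp
  next
    case False
    then have "degree g \<noteq> k \<or> g = 0" using coeffg by (metis leading_coeff_0_iff)
    then show ?thesis using degg assms(2) False by auto
  qed
  define h where "h = g - [:a:]"
  have h0: "poly h 0 = - a"
    using line[of 0] p2 unfolding h_def by (simp add: polyg)
  then have hnz: "h \<noteq> 0" using assms(3) by auto
  have degh: "degree h \<le> CARD('p) - 2"
    unfolding h_def using degree_diff_le[of g "CARD('p) - 2" "[:a:]"] degg2 by simp
  have inj: "inj_on (\<lambda>t. of_nat t :: 'p mod_ring) {1..<CARD('p)}"
  proof (rule inj_onI)
    fix i j assume i: "i \<in> {1..<CARD('p)}" and j: "j \<in> {1..<CARD('p)}"
      and e: "(of_nat i :: 'p mod_ring) = of_nat j"
    show "i = j"
    proof (rule ccontr)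
      assume "i \<noteq> j"
      then consider "i < j" | "j < i" by linarith
      then show False
      proof cases
        case 1
        then have "(of_nat (j - i) :: 'p mod_ring) = 0" using e by (simp add: of_nat_diff)
        then have "CARD('p) dvd (j - i)" by (simp add: of_nat_eq_0_iff_char_dvd)
        then show False using dvd_imp_le[of "CARD('p)" "j - i"] 1 j by auto
      next
        case 2
        then have "(of_nat (i - j) :: 'p mod_ring) = 0" using e by (simp add: of_nat_diff)
        then have "CARD('p) dvd (i - j)" by (simp add: of_nat_eq_0_iff_char_dvd)
        then show False using dvd_imp_le[of "CARD('p)" "i - j"] 2 i by auto
      qed
    qed
  qed
  have sub: "(\<lambda>t. of_nat t :: 'p mod_ring) ` {1..<CARD('p)} \<subseteq> {l. poly h l = 0}"
  proof
    fix l assume "l \<in> (\<lambda>t. of_nat t :: 'p mod_ring) ` {1..<CARD('p)}"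
    then obtain t where t: "t \<in> {1..<CARD('p)}" "l = of_nat t" by auto
    then have "mpoly_eval f (x + l *s d) = a" using line[of t] by auto
    then show "l \<in> {l. poly h l = 0}" unfolding h_def by (simp add: polyg)
  qed
  have "CARD('p) - 1 = card ((\<lambda>t. of_nat t :: 'p mod_ring) ` {1..<CARD('p)})"
    using card_image[OF inj] by simp
  also have "\<dots> \<le> card {l. poly h l = 0}"
    by (rule card_mono[OF poly_roots_finite[OF hnz] sub])
  also have "\<dots> \<le> degree h" by (rule card_poly_roots_bound[OF hnz])
  finally show False using degh p2 by linarith
qed

end
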